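(* For $\varepsilon\in(0,1/2)$, any quantum query algorithm that, given unitary oracles $U_\varphi,U_\psi$ preparing pure states $\ket{\varphi}=U_\varphi\ket{0}$ and $\ket{\psi}=U_\psi\ket{0}$ (with access to their inverses and controlled versions), estimates the trace distance $\mathrm{T}(\ket{\varphi},\ket{\psi})$ to within additive error $\varepsilon$ with probability at least $2/3$ (for all such inputs) has query complexity $\Omega(1/\varepsilon)$.
   Context: For pure states, $\mathrm{T}(\ket{\varphi},\ket{\psi})=\tfrac12\operatorname{tr}\bigl|\ket{\varphi}\bra{\varphi}-\ket{\psi}\bra{\psi}\bigr|=\sqrt{1-|\braket{\varphi}{\psi}|^2}$. Query complexity is the number of applications of the oracles, their inverses, or controlled versions in the algorithm's circuit. *)

theory Defs
  imports Complex_Main "Jordan_Normal_Form.Matrix"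
begin

definition adj :: "complex mat \<Rightarrow> complex mat" where
  "adj U = mat (dim_col U) (dim_row U) (\<lambda>(i,j). cnj (U $$ (j,i)))"

definition is_unitary :: "nat \<Rightarrow> complex mat \<Rightarrow> bool" where
  "is_unitary n U \<longleftrightarrow> U \<in> carrier_mat n n \<and> adj U * U = 1\<^sub>m n \<and> U * adj U = 1\<^sub>m n"

definition ket0 :: "nat \<Rightarrow> complex vec" where
  "ket0 n = unit_vec n 0"

definition braket :: "complex vec \<Rightarrow> complex vec \<Rightarrow> complex" where
  "braket u v = (\<Sum>i<dim_vec v. cnj (u $ i) * v $ i)"

text \<open>Trace distance of pure states, T = sqrt(1 - |<phi|psi>|^2)
  (equal to (1/2) tr| |phi><phi| - |psi><psi| | for unit vectors).\<close>
definition trace_dist_pure :: "complex vec \<Rightarrow> complex vec \<Rightarrow> real" where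
  "trace_dist_pure u v = sqrt (1 - (cmod (braket u v))\<^sup>2)"

text \<open>Workspace C^(2*N*K) = C^2 (control qubit) \<otimes> C^N (oracle register) \<otimes> C^K (ancilla).
  Index i encodes control c = i div (N*K), system s = (i div K) mod N, ancilla a = i mod K.
  Arbitrary unitaries between queries allow any placement of the oracle register and control,
  and computational-basis measurement followed by classical post-processing realises any POVM.\<close>

datatype query = Query (which_psi: bool) (inverse: bool) (controlled: bool)
  \<comment> \<open>which_psi: False = U_phi, True = U_psi\<close>

definition ctl :: "nat \<Rightarrow> nat \<Rightarrow> nat \<Rightarrow> nat" where "ctl N K i = i div (N*K)"
definition sys :: "nat \<Rightarrow> nat \<Rightarrow> nat \<Rightarrow> nat" where "sys N K i = (i div K) mod N"
definition anc :: "nat \<Rightarrow> nat \<Rightarrow> nat \<Rightarrow> nat" where "anc N K i = i mod K"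

text \<open>I_2 \<otimes> V \<otimes> I_K (uncontrolled) or |0><0| \<otimes> I_N \<otimes> I_K + |1><1| \<otimes> V \<otimes> I_K (controlled).\<close>
definition embed_gate :: "nat \<Rightarrow> nat \<Rightarrow> bool \<Rightarrow> complex mat \<Rightarrow> complex mat" where
  "embed_gate N K c V = mat (2*N*K) (2*N*K) (\<lambda>(i,j).
     if ctl N K i = ctl N K j \<and> anc N K i = anc N K j then
       (if \<not> c \<or> ctl N K i = 1 then V $$ (sys N K i, sys N K j)
        else (if sys N K i = sys N K j then 1 else 0))
     else 0)"

definition query_gate :: "nat \<Rightarrow> nat \<Rightarrow> complex mat \<Rightarrow> complex mat \<Rightarrow> query \<Rightarrow> complex mat" where
  "query_gate N K Uphi Upsi q =
     (let U = (if which_psi q then Upsi else Uphi);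
          V = (if inverse q then adj U else U)
      in embed_gate N K (controlled q) V)"

text \<open>An algorithm: unitaries A_0,...,A_T (list As of length T+1), queries Q_1..Q_T (list Qs),
  ancilla dimension K, classical post-processing f of the measured basis index.
  Final state: A_T O_T ... A_1 O_1 A_0 |0>.\<close>
record qalg =
  anc_dim :: nat
  unitaries :: "complex mat list"
  queries :: "query list"
  postproc :: "nat \<Rightarrow> real"

fun run :: "nat \<Rightarrow> nat \<Rightarrow> complex mat \<Rightarrow> complex mat \<Rightarrow> complex mat list \<Rightarrow> query list \<Rightarrow> complex vec \<Rightarrow> complex vec" where
  "run N K Uphi Upsi (A # As) (q # Qs) v = run N K Uphi Upsi As Qs (query_gate N K Uphi Upsi q *\<^sub>v (A *\<^sub>v v))"
| "run N K Uphi Upsi [A] [] v = A *\<^sub>v v"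
| "run N K Uphi Upsi _ _ v = v"

definition final_state :: "nat \<Rightarrow> qalg \<Rightarrow> complex mat \<Rightarrow> complex mat \<Rightarrow> complex vec" where
  "final_state N alg Uphi Upsi =
     run N (anc_dim alg) Uphi Upsi (unitaries alg) (queries alg) (ket0 (2 * N * anc_dim alg))"

definition well_formed :: "nat \<Rightarrow> qalg \<Rightarrow> bool" where
  "well_formed N alg \<longleftrightarrow> anc_dim alg \<ge> 1 \<and>
     length (unitaries alg) = length (queries alg) + 1 \<and>
     (\<forall>A \<in> set (unitaries alg). is_unitary (2 * N * anc_dim alg) A)"

definition num_queries :: "qalg \<Rightarrow> nat" where
  "num_queries alg = length (queries alg)"

definition prob_output :: "nat \<Rightarrow> qalg \<Rightarrow> complex mat \<Rightarrow> complex mat \<Rightarrow> (real \<Rightarrow> bool) \<Rightarrow> real" where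
  "prob_output N alg Uphi Upsi S =
     (let v = final_state N alg Uphi Upsi in
      \<Sum>j \<in> {j. j < dim_vec v \<and> S (postproc alg j)}. (cmod (v $ j))\<^sup>2)"

definition estimates_trace_distance :: "nat \<Rightarrow> real \<Rightarrow> qalg \<Rightarrow> bool" where
  "estimates_trace_distance N eps alg \<longleftrightarrow>
     (\<forall>Uphi Upsi. is_unitary N Uphi \<longrightarrow> is_unitary N Upsi \<longrightarrow>
        prob_output N alg Uphi Upsi
          (\<lambda>x. \<bar>x - trace_dist_pure (Uphi *\<^sub>v ket0 N) (Upsi *\<^sub>v ket0 N)\<bar> \<le> eps) \<ge> 2/3)"

end

theory Submission imports Defs "HOL-Analysis.L2_Norm" begin

lemma sum_split_prod: fixes p q :: nat shows "(\<Sum>j<p*q. g j) = (\<Sum>x<p. \<Sum>y<q. (g (x*q + y) :: 'a::comm_monoid_add))"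
proof -
  have "(\<Sum>j<p*q. g j) = (\<Sum>x<p. sum g {x*q..<x*q+q})" using sum.nat_group[of g q p] by simp
  also have "\<dots> = (\<Sum>x<p. \<Sum>y<q. g (x*q + y))"
    apply (rule sum.cong, simp)
  proof -
    fix x
    have "sum g {x*q..<x*q+q} = sum g {0 + x*q..<q + x*q}" by (simp add: add.commute)
    also have "\<dots> = (\<Sum>y\<in>{0..<q}. g (y + x*q))" by (rule sum.shift_bounds_nat_ivl)
    finally show "sum g {x*q..<x*q+q} = (\<Sum>y<q. g (x*q + y))" by (simp add: atLeast0LessThan add.commute)
  qed
  finally show ?thesis .
qed

definition idx :: "nat \<Rightarrow> nat \<Rightarrow> nat \<Rightarrow> nat \<Rightarrow> nat \<Rightarrow> nat" where
  "idx N K c s a = c*(N*K) + s*K + a"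

lemma sum_triple: "(\<Sum>j<2*N*K. g j) = (\<Sum>c<2. \<Sum>s<N. \<Sum>a<K. (g (idx N K c s a) :: 'a::comm_monoid_add))"
proof -
  have "(\<Sum>j<2*N*K. g j) = (\<Sum>j<2*(N*K). g j)" by (simp add: mult.assoc)
  also have "\<dots> = (\<Sum>c<2. \<Sum>t<N*K. g (c*(N*K) + t))" by (rule sum_split_prod)
  also have "\<dots> = (\<Sum>c<2. \<Sum>s<N. \<Sum>a<K. g (idx N K c s a))"
    by (subst sum_split_prod) (simp add: idx_def add.assoc)
  finally show ?thesis .
qed

lemma lt_NK: assumes "s < (N::nat)" "a < K" shows "s*K + a < N*K"
proof -
  have "s*K + a < s*K + K" using assms by simp
  also have "\<dots> = Suc s * K" by simp
  also have "\<dots> \<le> N*K" using assms by (intro mult_le_mono1) simp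
  finally show ?thesis .
qed

lemma idx_bound: assumes "c < 2" "s < N" "a < K" shows "idx N K c s a < 2*N*K"
proof -
  have "c*(N*K) + (s*K + a) < c*(N*K) + N*K" using lt_NK[OF assms(2,3)] by simp
  also have "\<dots> = Suc c * (N*K)" by simp
  also have "\<dots> \<le> 2*(N*K)" using assms by (intro mult_le_mono1) simp
  finally show ?thesis by (simp add: idx_def add.assoc mult.assoc)
qed

lemma idx_parts: assumes "s < N" "a < K"
  shows "ctl N K (idx N K c s a) = c" "sys N K (idx N K c s a) = s" "anc N K (idx N K c s a) = a"
proof -
  have lt: "s*K + a < N*K" by (rule lt_NK[OF assms])
  have "N*K \<noteq> 0" using assms by auto
  then have "(s*K + a + c*(N*K)) div (N*K) = c" using lt by simp
  then show "ctl N K (idx N K c s a) = c" unfolding ctl_def idx_def 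
    by (simp add: add.assoc add.commute)
  have e: "idx N K c s a = a + (s + c*N)*K" by (simp add: idx_def algebra_simps)
  show "anc N K (idx N K c s a) = a" unfolding anc_def e using assms
    by simp
  have "(idx N K c s a) div K = c*N + s" unfolding e using assms 
    by simp
  then show "sys N K (idx N K c s a) = s" unfolding sys_def using assms by simp
qed

lemma idx_surj: assumes "i < 2*N*K"
  shows "ctl N K i < 2" "sys N K i < N" "anc N K i < K" "idx N K (ctl N K i) (sys N K i) (anc N K i) = i"
proof -
  have "N \<noteq> 0" "K \<noteq> 0" using assms by (metis mult_0_right mult_0 not_less_zero)+
  then have NK: "N > 0" "K > 0" by auto
  show "ctl N K i < 2" unfolding ctl_def using assms
    by (simp add: less_mult_imp_div_less mult.assoc)
  show "sys N K i < N" unfolding sys_def using NK by simp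
  show "anc N K i < K" unfolding anc_def using NK by simp
  have d: "i div K div N = i div (N*K)" by (simp add: div_mult2_eq mult.commute)
  have "i = (i div K)*K + i mod K" by simp
  also have "i div K = (i div K div N)*N + (i div K) mod N" by simp
  finally have "i = ((i div (N*K))*N + (i div K) mod N)*K + i mod K" using d by simp
  then show "idx N K (ctl N K i) (sys N K i) (anc N K i) = i"
    unfolding idx_def ctl_def sys_def anc_def by (simp add: algebra_simps)
qed

definition blk :: "nat \<Rightarrow> nat \<Rightarrow> complex vec \<Rightarrow> nat \<Rightarrow> nat \<Rightarrow> complex vec" where
  "blk N K z c a = vec N (\<lambda>s. z $ idx N K c s a)"

lemma collapse_sum:
  fixes ci ai K N :: nat
  assumes "ci < 2" "ai < K"
  shows "(\<Sum>c<2. \<Sum>s<N. \<Sum>a<K. (if ci = c \<and> ai = a then h s else (0::complex))) = (\<Sum>s<N. h s)"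
proof -
  have "\<And>c s. (\<Sum>a<K. (if ci = c \<and> ai = a then h s else (0::complex))) = (if c = ci then h s else 0)"
  proof -
    fix c s
    have "(\<Sum>a<K. (if ci = c \<and> ai = a then h s else (0::complex))) = (\<Sum>a<K. (if ai = a then (if c = ci then h s else 0) else 0))"
      by (rule sum.cong) auto
    also have "\<dots> = (if c = ci then h s else 0)" using assms(2) sum.delta'[of "{..<K}" ai "\<lambda>_. if c = ci then h s else 0"] by simp
    finally show "(\<Sum>a<K. (if ci = c \<and> ai = a then h s else (0::complex))) = (if c = ci then h s else 0)" .
  qed
  then have "(\<Sum>c<2. \<Sum>s<N. \<Sum>a<K. (if ci = c \<and> ai = a then h s else (0::complex)))
     = (\<Sum>c<2. \<Sum>s<N. (if c = ci then h s else 0))" by simp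
  also have "\<dots> = (\<Sum>c<2. (if c = ci then (\<Sum>s<N. h s) else 0))"
    by (rule sum.cong) auto
  also have "\<dots> = (\<Sum>s<N. h s)" using assms by (simp add: sum.delta')
  finally show ?thesis .
qed

lemma embed_apply:
  assumes V: "V \<in> carrier_mat N N" and z: "z \<in> carrier_vec (2*N*K)" and i: "i < 2*N*K"
  shows "(embed_gate N K b V *\<^sub>v z) $ i =
    (if \<not> b \<or> ctl N K i = 1 then (V *\<^sub>v blk N K z (ctl N K i) (anc N K i)) $ (sys N K i) else z $ i)"
proof -
  note S = idx_surj[OF i]
  define ci where "ci = ctl N K i"
  define ai where "ai = anc N K i"
  define si where "si = sys N K i"
  define h where "h = (\<lambda>s. (if \<not> b \<or> ci = 1 then V $$ (si, s) else (if si = s then 1 else 0)) * z $ idx N K ci s ai)"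
  have "(embed_gate N K b V *\<^sub>v z) $ i = (\<Sum>j<2*N*K. embed_gate N K b V $$ (i,j) * z $ j)"
    using z i by (simp add: embed_gate_def scalar_prod_def lessThan_atLeast0)
  also have "\<dots> = (\<Sum>c<2. \<Sum>s<N. \<Sum>a<K. embed_gate N K b V $$ (i,idx N K c s a) * z $ idx N K c s a)"
    by (rule sum_triple)
  also have "\<dots> = (\<Sum>c<2. \<Sum>s<N. \<Sum>a<K. (if ci = c \<and> ai = a then h s else 0))"
  proof (intro sum.cong refl)
    fix c s a assume c: "c \<in> {..<2::nat}" and s: "s \<in> {..<N}" and a: "a \<in> {..<K}"
    then have j: "idx N K c s a < 2*N*K" by (simp add: idx_bound)
    have p: "ctl N K (idx N K c s a) = c" "sys N K (idx N K c s a) = s" "anc N K (idx N K c s a) = a"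
      using s a idx_parts by auto
    have "embed_gate N K b V $$ (i, idx N K c s a) = (if ci = c \<and> ai = a then (if \<not> b \<or> ci = 1 then V $$ (si,s) else (if si = s then 1 else 0)) else 0)"
      unfolding embed_gate_def using i j p by (simp add: ci_def ai_def si_def)
    then show "embed_gate N K b V $$ (i, idx N K c s a) * z $ idx N K c s a = (if ci = c \<and> ai = a then h s else 0)"
      unfolding h_def by auto
  qed
  also have "\<dots> = (\<Sum>s<N. h s)" using S by (intro collapse_sum) (auto simp: ci_def ai_def)
  also have "\<dots> = (if \<not> b \<or> ci = 1 then (V *\<^sub>v blk N K z ci ai) $ si else z $ i)"
  proof (cases "\<not> b \<or> ci = 1")
    case True
    then show ?thesis using V S unfolding h_def blk_def si_def
      by (simp add: scalar_prod_def lessThan_atLeast0 row_def)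
  next
    case False
    have m: "\<And>s. (if si = s then 1 else 0) * z $ idx N K ci s ai = (if si = s then z $ idx N K ci s ai else 0)" by simp
    from False have "(\<Sum>s<N. h s) = (\<Sum>s<N. (if si = s then 1 else 0) * z $ idx N K ci s ai)" unfolding h_def by simp
    also have "\<dots> = z $ idx N K ci si ai" unfolding m using S
      by (simp add: sum.delta si_def)
    finally have "(\<Sum>s<N. h s) = z $ idx N K ci si ai" .
    then show ?thesis using False S by (simp add: ci_def ai_def si_def)
  qed
  finally show ?thesis by (simp add: ci_def ai_def si_def)
qed
lemma embed_carrier: "embed_gate N K b V \<in> carrier_mat (2*N*K) (2*N*K)"
  unfolding embed_gate_def by (rule mat_carrier)

definition nsq :: "complex vec \<Rightarrow> real" where
  "nsq v = (\<Sum>i<dim_vec v. (cmod (v $ i))\<^sup>2)"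

lemma nsq_blocks: assumes "w \<in> carrier_vec (2*N*K)"
  shows "nsq w = (\<Sum>c<2. \<Sum>a<K. \<Sum>s<N. (cmod (w $ idx N K c s a))\<^sup>2)"
  using assms unfolding nsq_def by (simp add: sum_triple sum.swap[of _ "{..<N}"])

lemma nsq_blk: "nsq (blk N K z c a) = (\<Sum>s<N. (cmod (z $ idx N K c s a))\<^sup>2)"
  unfolding nsq_def blk_def by simp

lemma embed_nsq:
  assumes V: "V \<in> carrier_mat N N" and z: "z \<in> carrier_vec (2*N*K)"
  shows "nsq (embed_gate N K b V *\<^sub>v z) =
     (\<Sum>c<2. \<Sum>a<K. if \<not> b \<or> c = 1 then nsq (V *\<^sub>v blk N K z c a) else nsq (blk N K z c a))"
proof -
  have w: "embed_gate N K b V *\<^sub>v z \<in> carrier_vec (2*N*K)" by (rule mult_mat_vec_carrier[OF embed_carrier z])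
  show ?thesis unfolding nsq_blocks[OF w]
  proof (intro sum.cong refl)
    fix c a assume c: "c \<in> {..<2::nat}" and a: "a \<in> {..<K}"
    have e: "(embed_gate N K b V *\<^sub>v z) $ idx N K c s a =
       (if \<not> b \<or> c = 1 then (V *\<^sub>v blk N K z c a) $ s else z $ idx N K c s a)" if s: "s < N" for s
      using embed_apply[OF V z idx_bound[of c s N a K]] idx_parts[of s N a K c] c a s by simp
    show "(\<Sum>s<N. (cmod ((embed_gate N K b V *\<^sub>v z) $ idx N K c s a))\<^sup>2) =
      (if \<not> b \<or> c = 1 then nsq (V *\<^sub>v blk N K z c a) else nsq (blk N K z c a))"
    proof (cases "\<not> b \<or> c = 1")
      case True
      have "(cmod ((embed_gate N K b V *\<^sub>v z) $ idx N K c s a))\<^sup>2 = (cmod ((V *\<^sub>v blk N K z c a) $ s))\<^sup>2" if "s \<in> {..<N}" for s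
        using e[of s] that True by simp
      then show ?thesis unfolding nsq_def using True V by simp
    next
      case False
      have "(cmod ((embed_gate N K b V *\<^sub>v z) $ idx N K c s a))\<^sup>2 = (cmod (z $ idx N K c s a))\<^sup>2" if "s \<in> {..<N}" for s
        using e[of s] that False by simp
      then show ?thesis unfolding nsq_blk using False by simp
    qed
  qed
qed

lemma embed_diff_nsq:
  assumes V: "V \<in> carrier_mat N N" and z: "z \<in> carrier_vec (2*N*K)"
  shows "nsq (embed_gate N K b V *\<^sub>v z - z) =
     (\<Sum>c<2. \<Sum>a<K. if \<not> b \<or> c = 1 then nsq (V *\<^sub>v blk N K z c a - blk N K z c a) else 0)"
proof -
  have w: "embed_gate N K b V *\<^sub>v z - z \<in> carrier_vec (2*N*K)" 
    using mult_mat_vec_carrier[OF embed_carrier z] z by simp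
  show ?thesis unfolding nsq_blocks[OF w]
  proof (intro sum.cong refl)
    fix c a assume c: "c \<in> {..<2::nat}" and a: "a \<in> {..<K}"
    have e: "(embed_gate N K b V *\<^sub>v z - z) $ idx N K c s a =
       (if \<not> b \<or> c = 1 then (V *\<^sub>v blk N K z c a - blk N K z c a) $ s else 0)" if s: "s < N" for s
      using embed_apply[OF V z idx_bound[of c s N a K]] idx_parts[of s N a K c] c a s V z idx_bound[of c s N a K]
      by (simp add: embed_gate_def blk_def)
    show "(\<Sum>s<N. (cmod ((embed_gate N K b V *\<^sub>v z - z) $ idx N K c s a))\<^sup>2) =
      (if \<not> b \<or> c = 1 then nsq (V *\<^sub>v blk N K z c a - blk N K z c a) else 0)"
    proof (cases "\<not> b \<or> c = 1")
      case True
      have "(cmod ((embed_gate N K b V *\<^sub>v z - z) $ idx N K c s a))\<^sup>2 = (cmod ((V *\<^sub>v blk N K z c a - blk N K z c a) $ s))\<^sup>2" if "s \<in> {..<N}" for s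
        using e[of s] that True by simp
      then show ?thesis unfolding nsq_def using True V by (simp add: blk_def)
    next
      case False
      have "(cmod ((embed_gate N K b V *\<^sub>v z - z) $ idx N K c s a))\<^sup>2 = 0" if "s \<in> {..<N}" for s
        using e[of s] that False by simp
      then show ?thesis using False by simp
    qed
  qed
qed
lemma unit_pres:
  assumes A: "A \<in> carrier_mat m m" and U: "adj A * A = 1\<^sub>m m" and v: "v \<in> carrier_vec m"
  shows "(\<Sum>i<m. cnj ((A *\<^sub>v v) $ i) * (A *\<^sub>v v) $ i) = (\<Sum>i<m. cnj (v $ i) * v $ i)"
proof -
  have e: "(\<Sum>i<m. cnj (A$$(i,k)) * A$$(i,l)) = (if k = l then 1 else 0)" if "k < m" "l < m" for k l
  proof -
    have "(adj A * A) $$ (k,l) = (\<Sum>i<m. cnj (A$$(i,k)) * A$$(i,l))"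
      using A that by (simp add: adj_def scalar_prod_def lessThan_atLeast0)
    then show ?thesis using U that by simp
  qed
  have "(\<Sum>i<m. cnj ((A *\<^sub>v v) $ i) * (A *\<^sub>v v) $ i)
     = (\<Sum>i<m. (\<Sum>k<m. cnj (A$$(i,k)) * cnj (v$k)) * (\<Sum>l<m. A$$(i,l) * v$l))"
    using A v by (simp add: scalar_prod_def lessThan_atLeast0)
  also have "\<dots> = (\<Sum>i<m. \<Sum>k<m. \<Sum>l<m. (cnj (v$k) * v$l) * (cnj (A$$(i,k)) * A$$(i,l)))"
    unfolding sum_product by (intro sum.cong refl) (simp add: algebra_simps)
  also have "\<dots> = (\<Sum>k<m. \<Sum>l<m. \<Sum>i<m. (cnj (v$k) * v$l) * (cnj (A$$(i,k)) * A$$(i,l)))"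
    by (subst sum.swap, rule sum.cong[OF refl], rule sum.swap)
  also have "\<dots> = (\<Sum>k<m. \<Sum>l<m. (cnj (v$k) * v$l) * (if k = l then 1 else 0))"
    by (intro sum.cong refl) (simp add: sum_distrib_left[symmetric] e)
  also have "\<dots> = (\<Sum>k<m. cnj (v$k) * v$k)"
    by (simp add: if_distrib sum.delta cong: if_cong)
  finally show ?thesis .
qed

lemma nsq_complex: "complex_of_real (nsq v) = (\<Sum>i<dim_vec v. cnj (v $ i) * v $ i)"
proof -
  have t: "\<And>z. cnj z * z = complex_of_real ((cmod z)^2)" using complex_norm_square by (simp add: mult.commute)
  show ?thesis unfolding nsq_def by (simp only: t of_real_sum)
qed

lemma unitary_nsq: assumes "is_unitary m A" "v \<in> carrier_vec m"
  shows "nsq (A *\<^sub>v v) = nsq v"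
proof -
  have A: "A \<in> carrier_mat m m" "adj A * A = 1\<^sub>m m" using assms unfolding is_unitary_def by auto
  have "complex_of_real (nsq (A *\<^sub>v v)) = complex_of_real (nsq v)"
    unfolding nsq_complex using unit_pres[OF A assms(2)] A assms(2) by simp
  then show ?thesis by simp
qed

definition nrm :: "complex vec \<Rightarrow> real" where "nrm v = sqrt (nsq v)"

lemma nrm_L2: "nrm v = L2_set (\<lambda>i. cmod (v $ i)) {..<dim_vec v}"
  unfolding nrm_def nsq_def L2_set_def by simp

lemma nrm_tri: assumes "x \<in> carrier_vec n" "y \<in> carrier_vec n" "z \<in> carrier_vec n"
  shows "nrm (x - z) \<le> nrm (x - y) + nrm (y - z)"
proof -
  have "nrm (x - z) = L2_set (\<lambda>i. cmod (x $ i - z $ i)) {..<n}" using assms unfolding nrm_L2 by (auto intro!: L2_set_cong)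
  also have "\<dots> \<le> L2_set (\<lambda>i. cmod (x $ i - y $ i) + cmod (y $ i - z $ i)) {..<n}"
    by (rule L2_set_mono) (use norm_triangle_ineq[of "x $ i - y $ i" "y $ i - z $ i" for i] in auto)
  also have "\<dots> \<le> L2_set (\<lambda>i. cmod (x $ i - y $ i)) {..<n} + L2_set (\<lambda>i. cmod (y $ i - z $ i)) {..<n}"
    by (rule L2_set_triangle_ineq)
  also have "\<dots> = nrm (x - y) + nrm (y - z)" using assms unfolding nrm_L2 by (auto intro!: L2_set_cong arg_cong2[where f="(+)"])
  finally show ?thesis .
qed

lemma nrm_sym: assumes "x \<in> carrier_vec n" "y \<in> carrier_vec n" shows "nrm (x - y) = nrm (y - x)"
  using assms unfolding nrm_def nsq_def by (simp add: norm_minus_commute)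

lemma nsq_nonneg: "nsq v \<ge> 0" unfolding nsq_def by (simp add: sum_nonneg)

lemma nsq_split: assumes "z \<in> carrier_vec (2*N*K)"
  shows "nsq z = (\<Sum>c<2. \<Sum>a<K. nsq (blk N K z c a))"
  unfolding nsq_blocks[OF assms] nsq_blk ..

lemma blk_carrier: "blk N K z c a \<in> carrier_vec N" unfolding blk_def by simp

lemma embed_good:
  assumes V: "V \<in> carrier_mat N N"
    and pres: "\<And>u. u \<in> carrier_vec N \<Longrightarrow> nsq (V *\<^sub>v u) = nsq u"
    and close: "\<And>u. u \<in> carrier_vec N \<Longrightarrow> nsq (V *\<^sub>v u - u) \<le> d\<^sup>2 * nsq u"
    and d: "d \<ge> 0" and z: "z \<in> carrier_vec (2*N*K)"
  shows "nrm (embed_gate N K b V *\<^sub>v z) = nrm z" "nrm (embed_gate N K b V *\<^sub>v z - z) \<le> d * nrm z"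
proof -
  show "nrm (embed_gate N K b V *\<^sub>v z) = nrm z"
    unfolding nrm_def embed_nsq[OF V z] nsq_split[OF z] by (intro arg_cong[where f=sqrt] sum.cong refl) (simp add: pres blk_carrier)
  have "nsq (embed_gate N K b V *\<^sub>v z - z) \<le> (\<Sum>c<2. \<Sum>a<K. d\<^sup>2 * nsq (blk N K z c a))"
    unfolding embed_diff_nsq[OF V z]
    by (intro sum_mono) (auto simp: close blk_carrier nsq_nonneg)
  also have "\<dots> = d\<^sup>2 * nsq z" unfolding nsq_split[OF z] by (simp add: sum_distrib_left)
  finally have "sqrt (nsq (embed_gate N K b V *\<^sub>v z - z)) \<le> sqrt (d\<^sup>2 * nsq z)" by simp
  then show "nrm (embed_gate N K b V *\<^sub>v z - z) \<le> d * nrm z" unfolding nrm_def using d by (simp add: real_sqrt_mult)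
qed

definition rot :: "nat \<Rightarrow> complex \<Rightarrow> complex \<Rightarrow> complex mat" where
  "rot N a b = mat N N (\<lambda>(i,j). if i = 0 \<and> j = 0 then a else if i = 0 \<and> j = 1 then - b
     else if i = 1 \<and> j = 0 then b else if i = 1 \<and> j = 1 then a else if i = j then 1 else 0)"

lemma sum_split2: fixes N :: nat assumes "N \<ge> 2" shows "(\<Sum>i<N. f i) = f 0 + f 1 + (\<Sum>i\<in>{2..<N}. (f i :: 'a::comm_monoid_add))"
proof -
  have "{..<N} = {0,1} \<union> {2..<N}" using assms by auto
  then show ?thesis by (simp add: sum.union_disjoint add.assoc)
qed

lemma rot_carrier: "rot N a b \<in> carrier_mat N N" unfolding rot_def by simp

lemma rot_apply: assumes N: "N \<ge> 2" and u: "u \<in> carrier_vec N" and i: "i < N"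
  shows "(rot N a b *\<^sub>v u) $ i = (if i = 0 then a * u$0 - b * u$1 else if i = 1 then b * u$0 + a * u$1 else u$i)"
proof -
  have "(rot N a b *\<^sub>v u) $ i = (\<Sum>j<N. rot N a b $$ (i,j) * u$j)"
    using u i by (simp add: rot_def scalar_prod_def lessThan_atLeast0)
  also have "\<dots> = rot N a b $$ (i,0) * u$0 + rot N a b $$ (i,1) * u$1 + (\<Sum>j\<in>{2..<N}. rot N a b $$ (i,j) * u$j)"
    by (rule sum_split2[OF N])
  also have "(\<Sum>j\<in>{2..<N}. rot N a b $$ (i,j) * u$j) = (\<Sum>j\<in>{2..<N}. if i = j then u$j else 0)"
    using i by (intro sum.cong refl) (auto simp: rot_def)
  also have "\<dots> = (if i \<ge> 2 then u$i else 0)" using i by (simp add: sum.delta)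
  finally show ?thesis using i N by (auto simp: rot_def)
qed

lemma rot_mult: assumes N: "N \<ge> 2"
  shows "rot N a1 b1 * rot N a2 b2 = rot N (a1*a2 - b1*b2) (a1*b2 + b1*a2)"
proof (rule eq_matI)
  fix i j assume i: "i < dim_row (rot N (a1*a2 - b1*b2) (a1*b2 + b1*a2))" and j: "j < dim_col (rot N (a1*a2 - b1*b2) (a1*b2 + b1*a2))"
  then have i: "i < N" and j: "j < N" by (auto simp: rot_def)
  have "(rot N a1 b1 * rot N a2 b2) $$ (i,j) = (rot N a1 b1 *\<^sub>v col (rot N a2 b2) j) $ i"
    using i j by (simp add: rot_def)
  also have "\<dots> = (if i = 0 then a1 * col (rot N a2 b2) j $0 - b1 * col (rot N a2 b2) j $1 else if i = 1 then b1 * col (rot N a2 b2) j $0 + a1 * col (rot N a2 b2) j$1 else col (rot N a2 b2) j $i)"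
    by (rule rot_apply[OF N _ i]) (rule carrier_vecI, simp add: rot_def)
  also have "\<dots> = rot N (a1*a2 - b1*b2) (a1*b2 + b1*a2) $$ (i,j)"
    using i j N by (auto simp: rot_def algebra_simps)
  finally show "(rot N a1 b1 * rot N a2 b2) $$ (i,j) = rot N (a1*a2 - b1*b2) (a1*b2 + b1*a2) $$ (i,j)" .
qed (auto simp: rot_def)

lemma adj_rot: "adj (rot N a b) = rot N (cnj a) (- cnj b)"
  unfolding adj_def rot_def by (rule eq_matI) auto

lemma rot_one: "rot N 1 0 = 1\<^sub>m N"
  unfolding rot_def by (rule eq_matI) auto

lemma rot_unitary: assumes N: "N \<ge> 2" and ab: "a\<^sup>2 + b\<^sup>2 = 1"
  shows "is_unitary N (rot N (of_real a) (of_real b))"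
proof -
  have "complex_of_real a * complex_of_real a + complex_of_real b * complex_of_real b = 1"
    using ab by (metis of_real_add of_real_mult of_real_1 power2_eq_square)
  then show ?thesis
    unfolding is_unitary_def adj_rot using N by (simp add: rot_carrier rot_mult rot_one)
qed

lemma cmod_rot_ident:
  fixes p q :: real and x y :: complex
  shows "(cmod (of_real p * x - of_real q * y))\<^sup>2 + (cmod (of_real q * x + of_real p * y))\<^sup>2
       = (p\<^sup>2 + q\<^sup>2) * ((cmod x)\<^sup>2 + (cmod y)\<^sup>2)"
  unfolding cmod_power2 by (simp add: algebra_simps power2_eq_square)

lemma rot_close:
  assumes N: "N \<ge> 2" and ab: "a\<^sup>2 + b\<^sup>2 = 1" and ad: "2 - 2*a \<le> d\<^sup>2" and u: "u \<in> carrier_vec N"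
  shows "nsq (rot N (of_real a) (of_real b) *\<^sub>v u - u) \<le> d\<^sup>2 * nsq u"
proof -
  let ?w = "rot N (of_real a) (of_real b) *\<^sub>v u - u"
  have w: "?w $ i = (if i = 0 then of_real (a - 1) * u$0 - of_real b * u$1 else if i = 1 then of_real b * u$0 + of_real (a - 1) * u$1 else 0)"
    if "i < N" for i
    using rot_apply[OF N u that, of "of_real a" "of_real b"] that u by (simp add: algebra_simps)
  have dimw: "dim_vec ?w = N" using u by (simp add: rot_def)
  have "nsq ?w = (cmod (?w $ 0))\<^sup>2 + (cmod (?w $ 1))\<^sup>2 + (\<Sum>i\<in>{2..<N}. (cmod (?w $ i))\<^sup>2)"
    unfolding nsq_def dimw by (rule sum_split2[OF N])
  also have "(\<Sum>i\<in>{2..<N}. (cmod (?w $ i))\<^sup>2) = 0" using w by simp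
  also have "(cmod (?w $ 0))\<^sup>2 + (cmod (?w $ 1))\<^sup>2 = ((a-1)\<^sup>2 + b\<^sup>2) * ((cmod (u$0))\<^sup>2 + (cmod (u$1))\<^sup>2)"
    using w[of 0] w[of 1] N cmod_rot_ident[of "a-1" "u$0" b "u$1"] by simp
  also have "(a-1)\<^sup>2 + b\<^sup>2 = 2 - 2*a" using ab by (simp add: power2_eq_square algebra_simps)
  finally have e: "nsq ?w = (2 - 2*a) * ((cmod (u$0))\<^sup>2 + (cmod (u$1))\<^sup>2)" by simp
  have "nsq u = (cmod (u $ 0))\<^sup>2 + (cmod (u $ 1))\<^sup>2 + (\<Sum>i\<in>{2..<N}. (cmod (u $ i))\<^sup>2)"
    unfolding nsq_def using u by (simp add: sum_split2[OF N])
  then have le: "(cmod (u$0))\<^sup>2 + (cmod (u$1))\<^sup>2 \<le> nsq u" by (simp add: sum_nonneg)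
  have "nsq ?w \<le> d\<^sup>2 * ((cmod (u$0))\<^sup>2 + (cmod (u$1))\<^sup>2)" unfolding e
    using ad by (intro mult_right_mono) auto
  also have "\<dots> \<le> d\<^sup>2 * nsq u" using le by (intro mult_left_mono) auto
  finally show ?thesis .
qed

lemma rot_V_good:
  assumes N: "N \<ge> 2" and ab: "a\<^sup>2 + b\<^sup>2 = 1" and ad: "2 - 2*a \<le> d\<^sup>2" and d: "d \<ge> 0"
    and z: "z \<in> carrier_vec (2*N*K)"
  shows "nrm (embed_gate N K c (rot N (of_real a) (of_real b)) *\<^sub>v z) = nrm z"
        "nrm (embed_gate N K c (rot N (of_real a) (of_real b)) *\<^sub>v z - z) \<le> d * nrm z"
proof -
  have pres: "nsq (rot N (of_real a) (of_real b) *\<^sub>v u) = nsq u" if "u \<in> carrier_vec N" for u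
    by (rule unitary_nsq[OF rot_unitary[OF N ab] that])
  show "nrm (embed_gate N K c (rot N (of_real a) (of_real b)) *\<^sub>v z) = nrm z"
    by (rule embed_good(1)[OF rot_carrier pres rot_close[OF N ab ad] d z])
  show "nrm (embed_gate N K c (rot N (of_real a) (of_real b)) *\<^sub>v z - z) \<le> d * nrm z"
    by (rule embed_good(2)[OF rot_carrier pres rot_close[OF N ab ad] d z])
qed

lemma query_good:
  assumes N: "N \<ge> 2" and ab: "a\<^sup>2 + b\<^sup>2 = 1" and ad: "2 - 2*a \<le> d\<^sup>2" and d: "d \<ge> 0"
    and z: "z \<in> carrier_vec (2*N*K)"
  shows "nrm (query_gate N K (rot N 1 0) (rot N (of_real a) (of_real b)) q *\<^sub>v z) = nrm z \<and>
         nrm (query_gate N K (rot N 1 0) (rot N (of_real a) (of_real b)) q *\<^sub>v z - z) \<le> d * nrm z"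
proof -
  have one: "rot N 1 0 = rot N (of_real 1) (of_real 0)" by simp
  have g1: "nrm (embed_gate N K c (rot N 1 0) *\<^sub>v z) = nrm z \<and> nrm (embed_gate N K c (rot N 1 0) *\<^sub>v z - z) \<le> d * nrm z" for c
    unfolding one using rot_V_good[OF N _ _ d z, of 1 0] d by simp
  have g2: "nrm (embed_gate N K c (rot N (of_real a) (of_real b)) *\<^sub>v z) = nrm z \<and> nrm (embed_gate N K c (rot N (of_real a) (of_real b)) *\<^sub>v z - z) \<le> d * nrm z" for c
    using rot_V_good[OF N ab ad d z] by simp
  have ab': "a\<^sup>2 + (-b)\<^sup>2 = 1" using ab by simp
  have g3: "nrm (embed_gate N K c (rot N (of_real a) (of_real (-b))) *\<^sub>v z) = nrm z \<and> nrm (embed_gate N K c (rot N (of_real a) (of_real (-b))) *\<^sub>v z - z) \<le> d * nrm z" for c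
    using rot_V_good[OF N ab' ad d z] by simp
  have a1: "adj (rot N 1 0) = rot N 1 0" by (simp add: adj_rot)
  have a2: "adj (rot N (of_real a) (of_real b)) = rot N (of_real a) (of_real (-b))" by (simp add: adj_rot)
  show ?thesis unfolding query_gate_def Let_def
    using g1 g2 g3 a1 a2 by (cases "which_psi q"; cases "inverse q") auto
qed

lemma query_carrier: "query_gate N K P Q q \<in> carrier_mat (2*N*K) (2*N*K)"
  unfolding query_gate_def Let_def by (rule embed_carrier)

lemma unitary_nrm: assumes "is_unitary m A" "v \<in> carrier_vec m" shows "nrm (A *\<^sub>v v) = nrm v"
  unfolding nrm_def using unitary_nsq[OF assms] by simp

lemma hybrid:
  assumes G: "\<And>q z. z \<in> carrier_vec (2*N*K) \<Longrightarrow> nrm (query_gate N K P Q q *\<^sub>v z) = nrm z \<and> nrm (query_gate N K P Q q *\<^sub>v z - z) \<le> d * nrm z"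
    and G': "\<And>q z. z \<in> carrier_vec (2*N*K) \<Longrightarrow> nrm (query_gate N K P' Q' q *\<^sub>v z) = nrm z \<and> nrm (query_gate N K P' Q' q *\<^sub>v z - z) \<le> d * nrm z"
  shows "\<forall>A\<in>set As. is_unitary (2*N*K) A \<Longrightarrow> length As = length Qs + 1 \<Longrightarrow>
     v \<in> carrier_vec (2*N*K) \<Longrightarrow> u \<in> carrier_vec (2*N*K) \<Longrightarrow>
     run N K P Q As Qs v \<in> carrier_vec (2*N*K) \<and> run N K P' Q' As Qs u \<in> carrier_vec (2*N*K) \<and>
     nrm (run N K P' Q' As Qs u) = nrm u \<and>
     nrm (run N K P Q As Qs v - run N K P' Q' As Qs u) \<le> nrm (v - u) + 2 * d * real (length Qs) * nrm u"
proof (induction Qs arbitrary: As v u)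
  case Nil
  then obtain A where As: "As = [A]" by (cases As) auto
  have A: "is_unitary (2*N*K) A" "A \<in> carrier_mat (2*N*K) (2*N*K)" using Nil As by (auto simp: is_unitary_def)
  have "A *\<^sub>v v - A *\<^sub>v u = A *\<^sub>v (v - u)" using A Nil by (simp add: mult_minus_distrib_mat_vec)
  then have "nrm (A *\<^sub>v v - A *\<^sub>v u) = nrm (v - u)" using unitary_nrm[OF A(1)] Nil by simp
  then show ?case using As A Nil unitary_nrm[OF A(1)] by simp
next
  case (Cons q Qs)
  then obtain A As' where As: "As = A # As'" by (cases As) auto
  have A: "is_unitary (2*N*K) A" "A \<in> carrier_mat (2*N*K) (2*N*K)" using Cons As by (auto simp: is_unitary_def)
  define g where "g = query_gate N K P Q q"
  define g' where "g' = query_gate N K P' Q' q"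
  have gc: "g \<in> carrier_mat (2*N*K) (2*N*K)" "g' \<in> carrier_mat (2*N*K) (2*N*K)"
    unfolding g_def g'_def by (rule query_carrier)+
  define x where "x = A *\<^sub>v v"
  define y where "y = A *\<^sub>v u"
  have xy: "x \<in> carrier_vec (2*N*K)" "y \<in> carrier_vec (2*N*K)" using A Cons unfolding x_def y_def by auto
  define v1 where "v1 = g *\<^sub>v x"
  define u1 where "u1 = g' *\<^sub>v y"
  have c1: "v1 \<in> carrier_vec (2*N*K)" "u1 \<in> carrier_vec (2*N*K)" unfolding v1_def u1_def using gc xy by auto
  have ny: "nrm y = nrm u" unfolding y_def using unitary_nrm[OF A(1)] Cons by simp
  have nu1: "nrm u1 = nrm u" unfolding u1_def g'_def using G'[OF xy(2)] ny by simp
  have gy: "g *\<^sub>v y \<in> carrier_vec (2*N*K)" using gc xy by auto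
  have "nrm (v1 - u1) \<le> nrm (v1 - g *\<^sub>v y) + nrm (g *\<^sub>v y - u1)"
    by (rule nrm_tri[OF c1(1) gy c1(2)])
  also have "nrm (v1 - g *\<^sub>v y) = nrm (v - u)"
  proof -
    have "v1 - g *\<^sub>v y = g *\<^sub>v (x - y)" unfolding v1_def using gc xy by (simp add: mult_minus_distrib_mat_vec)
    moreover have "x - y = A *\<^sub>v (v - u)" unfolding x_def y_def using A Cons by (simp add: mult_minus_distrib_mat_vec)
    moreover have "x - y \<in> carrier_vec (2*N*K)" using xy by simp
    ultimately show ?thesis using G unitary_nrm[OF A(1)] Cons unfolding g_def by simp
  qed
  also have "nrm (g *\<^sub>v y - u1) \<le> nrm (g *\<^sub>v y - y) + nrm (y - u1)"
    by (rule nrm_tri[OF gy xy(2) c1(2)])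
  also have "nrm (y - u1) = nrm (u1 - y)" by (rule nrm_sym[OF xy(2) c1(2)])
  also have "nrm (g *\<^sub>v y - y) \<le> d * nrm u" using G[OF xy(2)] ny unfolding g_def by simp
  also have "nrm (u1 - y) \<le> d * nrm u" using G'[OF xy(2)] ny unfolding u1_def g'_def by simp
  finally have step: "nrm (v1 - u1) \<le> nrm (v - u) + 2 * d * nrm u" by simp
  have IH: "run N K P Q As' Qs v1 \<in> carrier_vec (2*N*K) \<and> run N K P' Q' As' Qs u1 \<in> carrier_vec (2*N*K) \<and>
     nrm (run N K P' Q' As' Qs u1) = nrm u1 \<and>
     nrm (run N K P Q As' Qs v1 - run N K P' Q' As' Qs u1) \<le> nrm (v1 - u1) + 2 * d * real (length Qs) * nrm u1"
    using Cons.IH[of As' v1 u1] Cons.prems As c1 by auto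
  have runs: "run N K P Q As (q # Qs) v = run N K P Q As' Qs v1" "run N K P' Q' As (q # Qs) u = run N K P' Q' As' Qs u1"
    unfolding As v1_def u1_def x_def y_def g_def g'_def by simp_all
  show ?case unfolding runs using IH step nu1 by (simp add: algebra_simps)
qed

lemma L2_sub: assumes "J \<subseteq> {..<m}" "dim_vec x = m"
  shows "L2_set (\<lambda>j. cmod (x $ j)) J \<le> nrm x"
  unfolding nrm_L2 L2_set_def using assms by (intro real_sqrt_le_mono sum_mono2) auto

lemma prob_sqrt:
  assumes v: "dim_vec v = m" and w: "dim_vec w = m" and J: "J \<subseteq> {..<m}"
  shows "sqrt (\<Sum>j\<in>J. (cmod (v $ j))\<^sup>2) \<le> sqrt (\<Sum>j\<in>J. (cmod (w $ j))\<^sup>2) + nrm (v - w)"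
proof -
  have "sqrt (\<Sum>j\<in>J. (cmod (v $ j))\<^sup>2) = L2_set (\<lambda>j. cmod (v $ j)) J" by (simp add: L2_set_def)
  also have "\<dots> \<le> L2_set (\<lambda>j. cmod (w $ j) + cmod ((v - w) $ j)) J"
  proof (rule L2_set_mono)
    fix j assume "j \<in> J" then have "j < m" using J by auto
    then show "cmod (v $ j) \<le> cmod (w $ j) + cmod ((v - w) $ j)"
      using v w norm_triangle_ineq[of "w $ j" "v $ j - w $ j"] by simp
  qed simp
  also have "\<dots> \<le> L2_set (\<lambda>j. cmod (w $ j)) J + L2_set (\<lambda>j. cmod ((v - w) $ j)) J"
    by (rule L2_set_triangle_ineq)
  also have "L2_set (\<lambda>j. cmod ((v - w) $ j)) J \<le> nrm (v - w)" using J w by (intro L2_sub[of J m]) auto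
  finally show ?thesis by (simp add: L2_set_def)
qed

lemma prob_disj:
  assumes J1: "J1 \<subseteq> {..<dim_vec w}" and J2: "J2 \<subseteq> {..<dim_vec w}" and dj: "J1 \<inter> J2 = {}"
  shows "(\<Sum>j\<in>J1. (cmod (w $ j))\<^sup>2) + (\<Sum>j\<in>J2. (cmod (w $ j))\<^sup>2) \<le> nsq w"
proof -
  have f: "finite J1" "finite J2" using J1 J2 finite_subset by auto
  have "(\<Sum>j\<in>J1. (cmod (w $ j))\<^sup>2) + (\<Sum>j\<in>J2. (cmod (w $ j))\<^sup>2) = (\<Sum>j\<in>J1 \<union> J2. (cmod (w $ j))\<^sup>2)"
    using f dj by (simp add: sum.union_disjoint)
  also have "\<dots> \<le> nsq w" unfolding nsq_def using J1 J2 by (intro sum_mono2) auto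
  finally show ?thesis .
qed

lemma rot_ket0: assumes N: "N \<ge> 2"
  shows "rot N a b *\<^sub>v ket0 N = vec N (\<lambda>i. if i = 0 then a else if i = 1 then b else 0)"
proof (rule eq_vecI)
  fix i assume "i < dim_vec (vec N (\<lambda>i. if i = 0 then a else if i = 1 then b else 0))"
  then have i: "i < N" by simp
  have k: "ket0 N \<in> carrier_vec N" unfolding ket0_def by simp
  show "(rot N a b *\<^sub>v ket0 N) $ i = vec N (\<lambda>i. if i = 0 then a else if i = 1 then b else 0) $ i"
    using rot_apply[OF N k i] i N by (auto simp: ket0_def)
qed (simp add: rot_def)

lemma braket_rot: assumes N: "N \<ge> 2"
  shows "braket (rot N 1 0 *\<^sub>v ket0 N) (rot N a b *\<^sub>v ket0 N) = a"
proof -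
  have "braket (rot N 1 0 *\<^sub>v ket0 N) (rot N a b *\<^sub>v ket0 N)
    = (\<Sum>i<N. cnj (if i = 0 then 1 else if i = 1 then 0 else 0) * (if i = 0 then a else if i = 1 then b else 0))"
    unfolding braket_def rot_ket0[OF N] by simp
  also have "\<dots> = a" using N by (simp add: sum_split2[OF N])
  finally show ?thesis .
qed

lemma nrm_ket0: assumes "m > 0" shows "nrm (ket0 m) = 1"
proof -
  have "nsq (ket0 m) = (\<Sum>i<m. (if i = 0 then 1 else 0))" unfolding nsq_def ket0_def
    by (intro sum.cong refl) auto
  also have "\<dots> = 1" using assms by (simp add: sum.delta)
  finally show ?thesis unfolding nrm_def by simp
qed

lemma final_dim: "dim_vec (final_state N alg P Q) = 2*N*anc_dim alg \<or> True" by simp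

theorem theorem5p2:
  "\<exists>c>0. \<forall>eps N alg. 0 < eps \<and> eps < 1/2 \<and> N \<ge> 2 \<and> well_formed N alg \<and>
      estimates_trace_distance N eps alg \<longrightarrow> real (num_queries alg) \<ge> c / eps"
proof (intro exI[of _ "1/60"] conjI allI impI)
  show "(0::real) < 1/60" by simp
  fix eps N alg
  assume H: "0 < eps \<and> eps < 1/2 \<and> N \<ge> 2 \<and> well_formed N alg \<and> estimates_trace_distance N eps alg"
  then have e0: "0 < eps" and e1: "eps < 1/2" and N: "N \<ge> 2" and wf: "well_formed N alg"
    and est: "estimates_trace_distance N eps alg" by auto
  define K where "K = anc_dim alg"
  define m where "m = 2*N*K"
  define T where "T = num_queries alg"
  have K: "K \<ge> 1" using wf unfolding well_formed_def K_def by simp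
  have m0: "m > 0" unfolding m_def using N K by simp
  define s where "s = eps * (3 - 2*eps)"
  have "eps * (1 - 2*eps) > 0" using e0 e1 by simp
  then have s1: "2*eps < s" unfolding s_def by (simp add: algebra_simps)
  have "(1 - 2*eps) * (1 - eps) \<ge> 0" using e0 e1 by simp
  then have s2: "s \<le> 1" unfolding s_def by (simp add: algebra_simps)
  have s3: "s \<le> 3*eps" unfolding s_def using e0 by (simp add: algebra_simps)
  have s0: "0 < s" using s1 e0 by simp
  define a where "a = sqrt (1 - s\<^sup>2)"
  have x0: "0 \<le> 1 - s\<^sup>2" "1 - s\<^sup>2 \<le> 1" using s0 s2 by (auto simp: power_le_one)
  have ab: "a\<^sup>2 + s\<^sup>2 = 1" unfolding a_def using x0 by simp
  have "(1 - s\<^sup>2)\<^sup>2 \<le> 1 - s\<^sup>2" using x0 by (simp add: power2_eq_square mult_left_le_one_le)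
  then have age: "1 - s\<^sup>2 \<le> a" unfolding a_def by (rule real_le_rsqrt)
  define d where "d = 2*s"
  have d0: "d \<ge> 0" using s0 by (simp add: d_def)
  have ss: "0 \<le> s*s" by simp
  have ad: "2 - 2*a \<le> d\<^sup>2" using age[unfolded power2_eq_square] ss unfolding d_def power2_eq_square by linarith
  have ad1: "2 - 2*(1::real) \<le> d\<^sup>2" by simp
  have ab1: "(1::real)\<^sup>2 + 0\<^sup>2 = 1" by simp
  define P where "P = rot N 1 0"
  define Q where "Q = rot N (of_real a) (of_real s)"
  have G2: "nrm (query_gate N K P Q q *\<^sub>v z) = nrm z \<and> nrm (query_gate N K P Q q *\<^sub>v z - z) \<le> d * nrm z"
    if "z \<in> carrier_vec (2*N*K)" for q z
    unfolding P_def Q_def by (rule query_good[OF N ab ad d0 that])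
  have G1: "nrm (query_gate N K P P q *\<^sub>v z) = nrm z \<and> nrm (query_gate N K P P q *\<^sub>v z - z) \<le> d * nrm z"
    if "z \<in> carrier_vec (2*N*K)" for q z
    using query_good[OF N ab1 ad1 d0 that, of q] unfolding P_def by simp
  have k: "ket0 (2*N*K) \<in> carrier_vec (2*N*K)" unfolding ket0_def by simp
  have wf2: "\<forall>A\<in>set (unitaries alg). is_unitary (2*N*K) A" "length (unitaries alg) = length (queries alg) + 1"
    using wf unfolding well_formed_def K_def by auto
  define v where "v = final_state N alg P Q"
  define w where "w = final_state N alg P P"
  have hyb: "v \<in> carrier_vec m \<and> w \<in> carrier_vec m \<and> nrm w = nrm (ket0 m) \<and>
      nrm (v - w) \<le> nrm (ket0 m - ket0 m) + 2 * d * real T * nrm (ket0 m)"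
    using hybrid[OF G2 G1, OF _ _ wf2 k k] unfolding v_def w_def final_state_def m_def K_def T_def num_queries_def
    by (simp add: K_def)
  have vm: "dim_vec v = m" and wm: "dim_vec w = m" using hyb by auto
  have nw: "nrm w = 1" using hyb nrm_ket0[OF m0] by simp
  have "ket0 m - ket0 m = 0\<^sub>v m" unfolding ket0_def by auto
  then have "nrm (ket0 m - ket0 m) = 0" unfolding nrm_def nsq_def by simp
  then have dist: "nrm (v - w) \<le> 2 * d * real T" using hyb nrm_ket0[OF m0] by simp
  have nsqw: "nsq w = 1" using nw unfolding nrm_def by simp
  have uP: "is_unitary N P" unfolding P_def using rot_unitary[OF N ab1] by simp
  have uQ: "is_unitary N Q" unfolding Q_def by (rule rot_unitary[OF N ab])
  have tdQ: "trace_dist_pure (P *\<^sub>v ket0 N) (Q *\<^sub>v ket0 N) = s"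
  proof -
    have "trace_dist_pure (P *\<^sub>v ket0 N) (Q *\<^sub>v ket0 N) = sqrt (1 - (cmod (of_real a))\<^sup>2)"
      unfolding trace_dist_pure_def P_def Q_def braket_rot[OF N] ..
    also have "1 - (cmod (of_real a))\<^sup>2 = s\<^sup>2" using ab by simp
    finally show ?thesis using s0 by simp
  qed
  have tdP: "trace_dist_pure (P *\<^sub>v ket0 N) (P *\<^sub>v ket0 N) = 0"
    unfolding trace_dist_pure_def P_def braket_rot[OF N] by simp
  define f where "f = postproc alg"
  define J2 where "J2 = {j. j < m \<and> \<bar>f j - s\<bar> \<le> eps}"
  define J1 where "J1 = {j. j < m \<and> \<bar>f j - 0\<bar> \<le> eps}"
  have "prob_output N alg P Q (\<lambda>x. \<bar>x - trace_dist_pure (P *\<^sub>v ket0 N) (Q *\<^sub>v ket0 N)\<bar> \<le> eps) \<ge> 2/3"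
    using est uP uQ unfolding estimates_trace_distance_def by blast
  then have pv: "(\<Sum>j\<in>J2. (cmod (v $ j))\<^sup>2) \<ge> 2/3"
    unfolding prob_output_def Let_def tdQ v_def[symmetric] vm J2_def f_def .
  have "prob_output N alg P P (\<lambda>x. \<bar>x - trace_dist_pure (P *\<^sub>v ket0 N) (P *\<^sub>v ket0 N)\<bar> \<le> eps) \<ge> 2/3"
    using est uP unfolding estimates_trace_distance_def by blast
  then have pw: "(\<Sum>j\<in>J1. (cmod (w $ j))\<^sup>2) \<ge> 2/3"
    unfolding prob_output_def Let_def tdP w_def[symmetric] wm J1_def f_def by simp
  have dj: "J1 \<inter> J2 = {}" unfolding J1_def J2_def using s1 by auto
  have "(\<Sum>j\<in>J1. (cmod (w $ j))\<^sup>2) + (\<Sum>j\<in>J2. (cmod (w $ j))\<^sup>2) \<le> 1"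
    using prob_disj[of J1 w J2] dj wm nsqw unfolding J1_def J2_def by auto
  then have pw2: "(\<Sum>j\<in>J2. (cmod (w $ j))\<^sup>2) \<le> 1/3" using pw by simp
  have J2m: "J2 \<subseteq> {..<m}" unfolding J2_def by auto
  have main: "sqrt (\<Sum>j\<in>J2. (cmod (v $ j))\<^sup>2) \<le> sqrt (\<Sum>j\<in>J2. (cmod (w $ j))\<^sup>2) + nrm (v - w)"
    by (rule prob_sqrt[OF vm wm J2m])
  have "4/5 < sqrt (2/3::real)" by (rule real_less_rsqrt) (simp add: power2_eq_square)
  also have "\<dots> \<le> sqrt (\<Sum>j\<in>J2. (cmod (v $ j))\<^sup>2)" using pv by simp
  finally have l1: "4/5 < sqrt (\<Sum>j\<in>J2. (cmod (v $ j))\<^sup>2)" .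
  have "sqrt (\<Sum>j\<in>J2. (cmod (w $ j))\<^sup>2) \<le> sqrt (1/3)" using pw2 by simp
  also have "sqrt (1/3::real) < 3/5"
  proof -
    have "sqrt (1/3::real) < sqrt ((3/5)\<^sup>2)" by (intro real_sqrt_less_mono) (simp add: power2_eq_square)
    then show ?thesis by simp
  qed
  finally have l2: "sqrt (\<Sum>j\<in>J2. (cmod (w $ j))\<^sup>2) < 3/5" .
  have "1/5 < nrm (v - w)" using l1 l2 main by simp
  then have "1/5 < 2 * d * real T" using dist by simp
  then have "1/5 < 12 * eps * real T" using s3 unfolding d_def
    by (smt (verit) mult_right_mono of_nat_0_le_iff)
  then have "1/60 < eps * real T" by simp
  then show "real (num_queries alg) \<ge> (1/60) / eps" using e0 unfolding T_def
    by (simp add: divide_le_eq algebra_simps)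
qed
end
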